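(* Let $\phi : X \to Y$ be an open code between shift spaces. If $\phi$ is constant-to-one, then $\phi$ is bi-closing.
   Context: Shift spaces are closed shift-invariant subsets of $\mathcal{A}^{\mathbb{Z}}$; a code is a continuous shift-commuting map. Open: images of open sets are open. Constant-to-one: all fibers finite of cardinality independent of $y \in Y$. Bi-closing: never identifies two distinct left asymptotic points nor two distinct right asymptotic points, where $x,\bar x$ are left (right) asymptotic if $d(\sigma^{-n}x,\sigma^{-n}\bar x)\to0$ ($d(\sigma^{n}x,\sigma^{n}\bar x)\to0$), $d(x,\bar x)=2^{-k}$ with $k$ maximal such that $x_{[-k,k]}=\bar x_{[-k,k]}$. *)

theory Defs
  imports "HOL-Analysis.Analysis"
begin

definition full_shift_top :: "(int \<Rightarrow> 'a) topology" where
  "full_shift_top = product_topology (\<lambda>_. discrete_topology UNIV) UNIV"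

definition shift :: "(int \<Rightarrow> 'a) \<Rightarrow> (int \<Rightarrow> 'a)" where
  "shift x = (\<lambda>i. x (i + 1))"

definition shift_pow :: "int \<Rightarrow> (int \<Rightarrow> 'a) \<Rightarrow> (int \<Rightarrow> 'a)" where
  "shift_pow n x = (\<lambda>i. x (i + n))"

definition shift_space :: "(int \<Rightarrow> 'a::finite) set \<Rightarrow> bool" where
  "shift_space X \<longleftrightarrow> closedin full_shift_top X \<and> shift ` X = X"

text \<open>The metric d(x,y) = 2^(-k), k maximal with x[-k,k] = y[-k,k]
  (k = -1 if x_0 \<noteq> y_0, d = 0 if x = y).\<close>
definition shift_dist :: "(int \<Rightarrow> 'a) \<Rightarrow> (int \<Rightarrow> 'a) \<Rightarrow> real" where
  "shift_dist x y = (if x = y then 0 else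
     2 powr (1 - real (LEAST m::nat. x (- int m) \<noteq> y (- int m) \<or> x (int m) \<noteq> y (int m))))"

definition left_asymptotic :: "(int \<Rightarrow> 'a) \<Rightarrow> (int \<Rightarrow> 'a) \<Rightarrow> bool" where
  "left_asymptotic x y \<longleftrightarrow>
     ((\<lambda>n::nat. shift_dist (shift_pow (- int n) x) (shift_pow (- int n) y)) \<longlonglongrightarrow> 0)"

definition right_asymptotic :: "(int \<Rightarrow> 'a) \<Rightarrow> (int \<Rightarrow> 'a) \<Rightarrow> bool" where
  "right_asymptotic x y \<longleftrightarrow>
     ((\<lambda>n::nat. shift_dist (shift_pow (int n) x) (shift_pow (int n) y)) \<longlonglongrightarrow> 0)"

definition is_code :: "(int \<Rightarrow> 'a::finite) set \<Rightarrow> (int \<Rightarrow> 'b::finite) set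
    \<Rightarrow> ((int \<Rightarrow> 'a) \<Rightarrow> (int \<Rightarrow> 'b)) \<Rightarrow> bool" where
  "is_code X Y \<phi> \<longleftrightarrow> shift_space X \<and> shift_space Y \<and>
     continuous_map (subtopology full_shift_top X) (subtopology full_shift_top Y) \<phi> \<and>
     (\<forall>x\<in>X. \<phi> (shift x) = shift (\<phi> x))"

definition open_code :: "(int \<Rightarrow> 'a::finite) set \<Rightarrow> (int \<Rightarrow> 'b::finite) set
    \<Rightarrow> ((int \<Rightarrow> 'a) \<Rightarrow> (int \<Rightarrow> 'b)) \<Rightarrow> bool" where
  "open_code X Y \<phi> \<longleftrightarrow>
     open_map (subtopology full_shift_top X) (subtopology full_shift_top Y) \<phi>"

definition constant_to_one :: "(int \<Rightarrow> 'a) set \<Rightarrow> (int \<Rightarrow> 'b) set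
    \<Rightarrow> ((int \<Rightarrow> 'a) \<Rightarrow> (int \<Rightarrow> 'b)) \<Rightarrow> bool" where
  "constant_to_one X Y \<phi> \<longleftrightarrow>
     (\<exists>N::nat. \<forall>y\<in>Y. finite {x\<in>X. \<phi> x = y} \<and> card {x\<in>X. \<phi> x = y} = N)"

definition bi_closing :: "(int \<Rightarrow> 'a) set \<Rightarrow> ((int \<Rightarrow> 'a) \<Rightarrow> (int \<Rightarrow> 'b)) \<Rightarrow> bool" where
  "bi_closing X \<phi> \<longleftrightarrow>
     (\<forall>x\<in>X. \<forall>x'\<in>X. x \<noteq> x' \<and> left_asymptotic x x' \<longrightarrow> \<phi> x \<noteq> \<phi> x') \<and>
     (\<forall>x\<in>X. \<forall>x'\<in>X. x \<noteq> x' \<and> right_asymptotic x x' \<longrightarrow> \<phi> x \<noteq> \<phi> x')"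

end

theory Submission
  imports Defs
begin


lemma topspace_full [simp]: "topspace (full_shift_top :: (int \<Rightarrow> 'a) topology) = UNIV"
  by (simp add: full_shift_top_def)

lemma compact_full: "compact_space (full_shift_top :: (int \<Rightarrow> 'a::finite) topology)"
  unfolding full_shift_top_def
  by (simp add: compact_space_product_topology compact_space_discrete_topology)

lemma coord_open: "openin full_shift_top {u :: int \<Rightarrow> 'a. u i = c}"
proof -
  have "continuous_map full_shift_top (discrete_topology (UNIV::'a set)) (\<lambda>x. x i)"
    unfolding full_shift_top_def by (rule continuous_map_product_projection) simp
  from openin_continuous_map_preimage[OF this, of "{c}"] show ?thesis by simp
qed

lemma cyl_open: "openin full_shift_top {u :: int \<Rightarrow> 'a. \<forall>i. \<bar>i\<bar> \<le> int K \<longrightarrow> u i = w i}"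
proof -
  have eq: "{u :: int \<Rightarrow> 'a. \<forall>i. \<bar>i\<bar> \<le> int K \<longrightarrow> u i = w i} = \<Inter> ((\<lambda>i. {u. u i = w i}) ` {- int K..int K})"
    by (auto simp: abs_le_iff)
  show ?thesis unfolding eq
    by (rule openin_Inter) (auto intro: coord_open)
qed



lemma shift_pow_equiv:
  assumes X: "shift ` X = X" and E: "\<forall>x\<in>X. \<phi> (shift x) = shift (\<phi> x)" and x: "x \<in> X"
  shows "shift_pow n x \<in> X \<and> \<phi> (shift_pow n x) = shift_pow n (\<phi> x)"
proof (induction n rule: int_induct[where k=0])
  case base
  show ?case using x by (simp add: shift_pow_def)
next
  case (step1 i)
  have e: "shift_pow (i+1) f = shift (shift_pow i f)" for f :: "int \<Rightarrow> 'c"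
    by (simp add: shift_pow_def shift_def ac_simps)
  show ?case using step1 X E unfolding e by auto
next
  case (step2 i)
  then have "shift_pow i x \<in> shift ` X" using X by simp
  then obtain u where u: "u \<in> X" "shift u = shift_pow i x" by auto
  have e: "shift_pow (i-1) f = g" if "shift g = shift_pow i f" for f g :: "int \<Rightarrow> 'c"
  proof
    fix j
    have "g j = shift g (j - 1)" by (simp add: shift_def)
    also have "\<dots> = f (j + (i - 1))" using that by (simp add: shift_pow_def algebra_simps)
    finally show "shift_pow (i-1) f j = g j" by (simp add: shift_pow_def)
  qed
  have "shift (\<phi> u) = shift_pow i (\<phi> x)" using E u step2 by auto
  then show ?case using e[OF u(2)] e[of "\<phi> u"] u by auto
qed

lemma asym_agree:
  fixes x x' :: "int \<Rightarrow> 'a"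
  assumes "(\<lambda>n. shift_dist (shift_pow (s n) x) (shift_pow (s n) x')) \<longlonglongrightarrow> 0"
  shows "\<exists>n. \<forall>i. \<bar>i\<bar> \<le> int K \<longrightarrow> shift_pow (s n) x i = shift_pow (s n) x' i"
proof -
  have pos: "(0::real) < 2 powr (- real K)" by simp
  from assms have "eventually (\<lambda>n. dist (shift_dist (shift_pow (s n) x) (shift_pow (s n) x')) 0 < 2 powr (- real K)) sequentially"
    using tendstoD[OF assms pos] by simp
  then obtain n where n: "\<bar>shift_dist (shift_pow (s n) x) (shift_pow (s n) x')\<bar> < 2 powr (- real K)"
    by (auto simp: eventually_sequentially dist_real_def)
  define u where "u = shift_pow (s n) x"
  define v where "v = shift_pow (s n) x'"
  have "\<forall>i. \<bar>i\<bar> \<le> int K \<longrightarrow> u i = v i"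
  proof (cases "u = v")
    case True then show ?thesis by simp
  next
    case False
    define m where "m = (LEAST m::nat. u (- int m) \<noteq> v (- int m) \<or> u (int m) \<noteq> v (int m))"
    from n False have "2 powr (1 - real m) < 2 powr (- real K)"
      by (simp add: shift_dist_def u_def v_def m_def)
    then have "1 - real m < - real K" by simp
    then have mK: "K < m" by simp
    show ?thesis
    proof (intro allI impI)
      fix i :: int assume "\<bar>i\<bar> \<le> int K"
      then have "nat \<bar>i\<bar> < m" using mK by simp
      then have "\<not> (u (- int (nat \<bar>i\<bar>)) \<noteq> v (- int (nat \<bar>i\<bar>)) \<or> u (int (nat \<bar>i\<bar>)) \<noteq> v (int (nat \<bar>i\<bar>)))"
        unfolding m_def by (rule not_less_Least)
      then show "u i = v i" by (cases "i \<ge> 0") auto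
    qed
  qed
  then show ?thesis unfolding u_def v_def by blast
qed



lemma sep_finite:
  fixes F :: "(int \<Rightarrow> 'a) set"
  assumes "finite F"
  shows "\<exists>K::nat. \<forall>w\<in>F. \<forall>w'\<in>F. w \<noteq> w' \<longrightarrow> (\<exists>i. \<bar>i\<bar> \<le> int K \<and> w i \<noteq> w' i)"
proof -
  define S where "S = {p \<in> F \<times> F. fst p \<noteq> snd p}"
  have fS: "finite S" unfolding S_def using assms by auto
  have "\<forall>p\<in>S. \<exists>i. fst p i \<noteq> snd p i" unfolding S_def by (auto simp: fun_eq_iff)
  then obtain f where f: "\<forall>p\<in>S. fst p (f p) \<noteq> snd p (f p)" by metis
  define K where "K = Max (insert 0 ((\<lambda>p. nat \<bar>f p\<bar>) ` S))"
  have "\<forall>p\<in>S. nat \<bar>f p\<bar> \<le> K" unfolding K_def using fS by auto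
  then have "\<forall>p\<in>S. \<bar>f p\<bar> \<le> int K" by auto
  then show ?thesis using f unfolding S_def by (metis (mono_tags, lifting) fst_conv mem_Collect_eq mem_Sigma_iff snd_conv)
qed

lemma uniform_sep:
  fixes X :: "(int \<Rightarrow> 'a::finite) set" and Y :: "(int \<Rightarrow> 'b::finite) set"
    and \<phi> :: "(int \<Rightarrow> 'a) \<Rightarrow> (int \<Rightarrow> 'b)"
  assumes code: "is_code X Y \<phi>" and op: "open_code X Y \<phi>" and ct: "constant_to_one X Y \<phi>"
  shows "\<exists>K::nat. \<forall>u\<in>X. \<forall>v\<in>X. \<phi> u = \<phi> v \<longrightarrow> u \<noteq> v \<longrightarrow> (\<exists>i. \<bar>i\<bar> \<le> int K \<and> u i \<noteq> v i)"
proof -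
  from ct obtain N where N: "\<forall>y\<in>Y. finite {x\<in>X. \<phi> x = y} \<and> card {x\<in>X. \<phi> x = y} = N"
    unfolding constant_to_one_def by blast
  from code have cm: "continuous_map (subtopology full_shift_top X) (subtopology full_shift_top Y) \<phi>"
    and clY: "closedin full_shift_top Y"
    unfolding is_code_def shift_space_def by auto
  have img: "\<phi> ` X \<subseteq> Y" using continuous_map_image_subset_topspace[OF cm] by simp
  have om: "openin (subtopology full_shift_top Y) (\<phi> ` U)" if "openin (subtopology full_shift_top X) U" for U
    using op that unfolding open_code_def open_map_def by blast
  define C where "C K w = {u :: int \<Rightarrow> 'a. \<forall>i. \<bar>i\<bar> \<le> int K \<longrightarrow> u i = w i}" for K w
  define Q where "Q z W K \<longleftrightarrow> openin full_shift_top W \<and> z \<in> W \<and>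
     (\<forall>y'\<in>Y \<inter> W. \<forall>u\<in>X. \<forall>v\<in>X. \<phi> u = y' \<longrightarrow> \<phi> v = y' \<longrightarrow> u \<noteq> v \<longrightarrow> (\<exists>i. \<bar>i\<bar> \<le> int K \<and> u i \<noteq> v i))" for z W and K :: nat
  have local: "\<exists>p. Q z (fst p) (snd p)"
    if zY: "z \<in> Y" for z
  proof -
    define F where "F = {x\<in>X. \<phi> x = z}"
    have fF: "finite F" and cF: "card F = N" using N zY unfolding F_def by auto
    obtain K where K: "\<forall>w\<in>F. \<forall>w'\<in>F. w \<noteq> w' \<longrightarrow> (\<exists>i. \<bar>i\<bar> \<le> int K \<and> w i \<noteq> w' i)"
      using sep_finite[OF fF] by blast
    define V where "V = \<Inter> (insert Y ((\<lambda>w. \<phi> ` (X \<inter> C K w)) ` F))"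
    have "openin (subtopology full_shift_top Y) V"
      unfolding V_def
    proof (rule openin_Inter)
      fix S assume "S \<in> insert Y ((\<lambda>w. \<phi> ` (X \<inter> C K w)) ` F)"
      then show "openin (subtopology full_shift_top Y) S"
      proof
        assume "S = Y" then show ?thesis using openin_topspace[of "subtopology full_shift_top Y"] by simp
      next
        assume "S \<in> (\<lambda>w. \<phi> ` (X \<inter> C K w)) ` F"
        then obtain w where "S = \<phi> ` (X \<inter> C K w)" by auto
        moreover have "openin (subtopology full_shift_top X) (X \<inter> C K w)"
          unfolding openin_subtopology C_def using cyl_open by blast
        ultimately show ?thesis using om by simp
      qed
    qed (use fF in auto)
    then obtain W where W: "openin full_shift_top W" "V = W \<inter> Y" unfolding openin_subtopology by blast
    have zV: "z \<in> V" unfolding V_def C_def F_def using zY by auto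
    have sepV: "\<exists>i. \<bar>i\<bar> \<le> int K \<and> u i \<noteq> v i"
      if y'V: "y' \<in> V" and u: "u \<in> X" "\<phi> u = y'" and v: "v \<in> X" "\<phi> v = y'" and uv: "u \<noteq> v" for y' u v
    proof (rule ccontr)
      assume na: "\<not> (\<exists>i. \<bar>i\<bar> \<le> int K \<and> u i \<noteq> v i)"
      define G where "G = {x\<in>X. \<phi> x = y'}"
      have y'Y: "y' \<in> Y" using y'V unfolding V_def by auto
      have fG: "finite G" and cG: "card G = N" using N y'Y unfolding G_def by auto
      have "\<forall>w\<in>F. \<exists>g. g \<in> G \<and> g \<in> C K w" using y'V unfolding V_def G_def by fastforce
      then obtain g where g: "\<forall>w\<in>F. g w \<in> G \<and> g w \<in> C K w" by metis
      have inj: "inj_on g F"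
      proof (rule inj_onI)
        fix w w'
        assume a: "w \<in> F" "w' \<in> F" "g w = g w'"
        show "w = w'"
        proof (rule ccontr)
          assume "w \<noteq> w'"
          then obtain i where i: "\<bar>i\<bar> \<le> int K" "w i \<noteq> w' i" using K a by blast
          have "g w i = w i" using g a(1) i(1) unfolding C_def by blast
          moreover have "g w' i = w' i" using g a(2) i(1) unfolding C_def by blast
          ultimately show False using a(3) i(2) by simp
        qed
      qed
      have "g ` F \<subseteq> G" using g by auto
      moreover have "card (g ` F) = card G" using card_image[OF inj] cF cG by simp
      ultimately have "g ` F = G" using fG by (simp add: card_subset_eq)
      moreover have "u \<in> G" "v \<in> G" unfolding G_def using u v by auto
      ultimately obtain w1 w2 where w: "w1 \<in> F" "w2 \<in> F" "u = g w1" "v = g w2" by blast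
      then have "w1 \<noteq> w2" using uv by auto
      then obtain i where i: "\<bar>i\<bar> \<le> int K" "w1 i \<noteq> w2 i" using K w by blast
      have "u \<in> C K w1" using g w(1) w(3) by blast
      then have "w1 i = u i" using i(1) unfolding C_def by simp
      have "v \<in> C K w2" using g w(2) w(4) by blast
      then have "w2 i = v i" using i(1) unfolding C_def by simp
      then show False using na i \<open>w1 i = u i\<close> by auto
    qed
    have "Q z W K" unfolding Q_def
    proof (intro conjI ballI impI)
      show "openin full_shift_top W" using W(1) .
      show "z \<in> W" using zV W(2) by blast
      fix y' u v assume a: "y' \<in> Y \<inter> W" "u \<in> X" "v \<in> X" "\<phi> u = y'" "\<phi> v = y'" "u \<noteq> v"
      have "y' \<in> V" using a(1) W(2) by blast
      from sepV[OF this a(2) a(4) a(3) a(5) a(6)] show "\<exists>i. \<bar>i\<bar> \<le> int K \<and> u i \<noteq> v i" .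
    qed
    then show ?thesis by (intro exI[of _ "(W, K)"]) simp
  qed
  then have "\<forall>z\<in>Y. \<exists>p. Q z (fst p) (snd p)" by blast
  from bchoice[OF this] obtain f where f: "\<forall>z\<in>Y. Q z (fst (f z)) (snd (f z))" by blast
  define W where "W z = fst (f z)" for z
  define Kf where "Kf z = snd (f z)" for z
  have OK: "\<And>z. z \<in> Y \<Longrightarrow> Q z (W z) (Kf z)"
    unfolding W_def Kf_def using f by blast
  have cY: "compactin full_shift_top Y" using closedin_compact_space[OF compact_full clY] .
  from cY have cov: "\<And>\<U>. \<forall>B\<in>\<U>. openin full_shift_top B \<Longrightarrow> Y \<subseteq> \<Union>\<U> \<Longrightarrow> \<exists>\<F>. finite \<F> \<and> \<F> \<subseteq> \<U> \<and> Y \<subseteq> \<Union>\<F>"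
    unfolding compactin_def by blast
  have h1: "\<forall>U\<in>W ` Y. openin full_shift_top U" using OK unfolding Q_def by blast
  have h2: "Y \<subseteq> \<Union> (W ` Y)" using OK unfolding Q_def by blast
  have "\<exists>\<F>. finite \<F> \<and> \<F> \<subseteq> W ` Y \<and> Y \<subseteq> \<Union>\<F>"
    by (rule cov) (rule h1, rule h2)
  then obtain \<F> where F: "finite \<F>" "\<F> \<subseteq> W ` Y" "Y \<subseteq> \<Union>\<F>" by blast
  from finite_subset_image[OF F(1) F(2)] obtain T where T: "T \<subseteq> Y" "finite T" "\<F> = W ` T" by blast
  define K where "K = Max (insert 0 (Kf ` T))"
  have KT: "Kf t \<le> K" if "t \<in> T" for t unfolding K_def using T(2) that by simp
  show ?thesis
  proof (rule exI[of _ K], intro ballI impI)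
    fix u v assume u: "u \<in> X" and v: "v \<in> X" and e: "\<phi> u = \<phi> v" and uv: "u \<noteq> v"
    have uY: "\<phi> u \<in> Y" using img u by blast
    then have "\<phi> u \<in> \<Union> (W ` T)" using F(3) T(3) by blast
    then obtain t where t: "t \<in> T" "\<phi> u \<in> W t" by blast
    have "Q t (W t) (Kf t)" using OK T(1) t(1) by blast
    then have H: "\<forall>y'\<in>Y \<inter> W t. \<forall>u\<in>X. \<forall>v\<in>X. \<phi> u = y' \<longrightarrow> \<phi> v = y' \<longrightarrow> u \<noteq> v \<longrightarrow> (\<exists>i. \<bar>i\<bar> \<le> int (Kf t) \<and> u i \<noteq> v i)"
      unfolding Q_def by blast
    have yW: "\<phi> u \<in> Y \<inter> W t" using t uY by blast
    obtain i where i: "\<bar>i\<bar> \<le> int (Kf t)" "u i \<noteq> v i"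
      using H[rule_format, OF yW u v refl e[symmetric] uv] by blast
    have "int (Kf t) \<le> int K" using KT[OF t(1)] by simp
    then show "\<exists>i. \<bar>i\<bar> \<le> int K \<and> u i \<noteq> v i" using i by (intro exI[of _ i]) simp
  qed
qed



lemma no_collapse:
  fixes X :: "(int \<Rightarrow> 'a::finite) set" and \<phi> :: "(int \<Rightarrow> 'a) \<Rightarrow> (int \<Rightarrow> 'b)"
  assumes XX: "shift ` X = X" and E: "\<forall>x\<in>X. \<phi> (shift x) = shift (\<phi> x)"
    and Ks: "\<forall>u\<in>X. \<forall>v\<in>X. \<phi> u = \<phi> v \<longrightarrow> u \<noteq> v \<longrightarrow> (\<exists>i. \<bar>i\<bar> \<le> int K \<and> u i \<noteq> v i)"
    and x: "x \<in> X" and x': "x' \<in> X" and ne: "x \<noteq> x'" and e: "\<phi> x = \<phi> x'"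
    and ag: "\<forall>i. \<bar>i\<bar> \<le> int K \<longrightarrow> shift_pow m x i = shift_pow m x' i"
  shows False
proof -
  have u: "shift_pow m x \<in> X" "\<phi> (shift_pow m x) = shift_pow m (\<phi> x)"
    using shift_pow_equiv[OF XX E x] by auto
  have v: "shift_pow m x' \<in> X" "\<phi> (shift_pow m x') = shift_pow m (\<phi> x')"
    using shift_pow_equiv[OF XX E x'] by auto
  have "shift_pow m x \<noteq> shift_pow m x'"
  proof
    assume "shift_pow m x = shift_pow m x'"
    then have "\<And>j. x (j - m + m) = x' (j - m + m)" by (metis shift_pow_def)
    then have "x = x'" by (simp add: fun_eq_iff)
    then show False using ne by simp
  qed
  then obtain i where "\<bar>i\<bar> \<le> int K" "shift_pow m x i \<noteq> shift_pow m x' i"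
    using Ks u v e by metis
  then show False using ag by blast
qed

theorem proposition2p10:
  fixes X :: "(int \<Rightarrow> 'a::finite) set" and Y :: "(int \<Rightarrow> 'b::finite) set"
    and \<phi> :: "(int \<Rightarrow> 'a) \<Rightarrow> (int \<Rightarrow> 'b)"
  assumes "is_code X Y \<phi>"
    and "open_code X Y \<phi>"
    and "constant_to_one X Y \<phi>"
  shows "bi_closing X \<phi>"
proof -
  obtain K where Ks: "\<forall>u\<in>X. \<forall>v\<in>X. \<phi> u = \<phi> v \<longrightarrow> u \<noteq> v \<longrightarrow> (\<exists>i. \<bar>i\<bar> \<le> int K \<and> u i \<noteq> v i)"
    using uniform_sep[OF assms] by blast
  have XX: "shift ` X = X" and E: "\<forall>x\<in>X. \<phi> (shift x) = shift (\<phi> x)"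
    using assms(1) unfolding is_code_def shift_space_def by auto
  show ?thesis unfolding bi_closing_def
  proof (intro conjI ballI impI notI)
    fix x x' assume x: "x \<in> X" and x': "x' \<in> X" and h: "x \<noteq> x' \<and> left_asymptotic x x'"
      and e: "\<phi> x = \<phi> x'"
    from h have "(\<lambda>n. shift_dist (shift_pow (- int n) x) (shift_pow (- int n) x')) \<longlonglongrightarrow> 0"
      unfolding left_asymptotic_def by blast
    from asym_agree[of "\<lambda>n. - int n", OF this] obtain n where
      "\<forall>i. \<bar>i\<bar> \<le> int K \<longrightarrow> shift_pow (- int n) x i = shift_pow (- int n) x' i" by blast
    from no_collapse[OF XX E Ks x x' _ e this] h show False by blast
  next
    fix x x' assume x: "x \<in> X" and x': "x' \<in> X" and h: "x \<noteq> x' \<and> right_asymptotic x x'"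
      and e: "\<phi> x = \<phi> x'"
    from h have "(\<lambda>n. shift_dist (shift_pow (int n) x) (shift_pow (int n) x')) \<longlonglongrightarrow> 0"
      unfolding right_asymptotic_def by blast
    from asym_agree[of "\<lambda>n. int n", OF this] obtain n where
      "\<forall>i. \<bar>i\<bar> \<le> int K \<longrightarrow> shift_pow (int n) x i = shift_pow (int n) x' i" by blast
    from no_collapse[OF XX E Ks x x' _ e this] h show False by blast
  qed
qed


end
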